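(* Let $k\ge 3$. Then $\displaystyle\lim_{n\to\infty}\frac{M_k(n)-L_k(n)}{L_k(n)}=0$, where $L_k(n)=|\mathbf{S}_k(n)|$.
   Context: Let $\Sigma=\{0,1,\dots,k-1\}$. Strings are compared lexicographically ($\alpha<\beta$ if $\alpha$ is a proper prefix of $\beta$, or $\alpha$ has the smaller symbol at the first index where they differ). For $\alpha=a_1\cdots a_n$, $\alpha^R=a_n\cdots a_1$; $[\alpha]$ is the set of rotations of $\alpha$. $\alpha$ is a necklace if it is the lexicographically smallest element of $[\alpha]$; a bracelet if it is the lexicographically smallest element of $[\alpha]\cup[\alpha^R]$. A necklace $\alpha$ is symmetric if $\alpha^R\in[\alpha]$, asymmetric otherwise. $\mathbf{A}_k(n)$ is the set of asymmetric bracelets of length $n$ over $\Sigma$, and $\mathbf{S}_k(n)=\bigcup_{\alpha\in\mathbf{A}_k(n)}[\alpha]$. A cyclic sequence $s_1\cdots s_L$ has windows $w_t=s_t\cdots s_{t+n-1}$ ($t=1,\dots,L$, indices mod $L$); it is an orientable sequence of order $n$ if the $2L$ strings $w_1,\dots,w_L,w_1^R,\dots,w_L^R$ are pairwise distinct. $M_k(n)$ is the maximum length of an orientable sequence of order $n$ over $\Sigma$. *)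

theory Defs
  imports Complex_Main
begin

definition strings :: "nat \<Rightarrow> nat \<Rightarrow> nat list set" where
  "strings k n = {xs. length xs = n \<and> (\<forall>x\<in>set xs. x < k)}"

definition lex_less :: "nat list \<Rightarrow> nat list \<Rightarrow> bool" where
  "lex_less a b \<longleftrightarrow>
     (\<exists>zs. zs \<noteq> [] \<and> b = a @ zs) \<or>
     (\<exists>i < min (length a) (length b). take i a = take i b \<and> a ! i < b ! i)"

definition lex_le :: "nat list \<Rightarrow> nat list \<Rightarrow> bool" where
  "lex_le a b \<longleftrightarrow> a = b \<or> lex_less a b"

definition rots :: "nat list \<Rightarrow> nat list set" where
  "rots a = {rotate i a | i. i < length a} \<union> {a}"

definition is_necklace :: "nat list \<Rightarrow> bool" where
  "is_necklace a \<longleftrightarrow> (\<forall>b\<in>rots a. lex_le a b)"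

definition is_bracelet :: "nat list \<Rightarrow> bool" where
  "is_bracelet a \<longleftrightarrow> (\<forall>b\<in>rots a \<union> rots (rev a). lex_le a b)"

definition symmetric_necklace :: "nat list \<Rightarrow> bool" where
  "symmetric_necklace a \<longleftrightarrow> is_necklace a \<and> rev a \<in> rots a"

definition asymmetric_necklace :: "nat list \<Rightarrow> bool" where
  "asymmetric_necklace a \<longleftrightarrow> is_necklace a \<and> rev a \<notin> rots a"

definition asym_bracelets :: "nat \<Rightarrow> nat \<Rightarrow> nat list set" where
  "asym_bracelets k n = {a \<in> strings k n. is_bracelet a \<and> asymmetric_necklace a}"

definition S_set :: "nat \<Rightarrow> nat \<Rightarrow> nat list set" where
  "S_set k n = (\<Union>a\<in>asym_bracelets k n. rots a)"

definition L_k :: "nat \<Rightarrow> nat \<Rightarrow> nat" where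
  "L_k k n = card (S_set k n)"

definition window :: "nat list \<Rightarrow> nat \<Rightarrow> nat \<Rightarrow> nat list" where
  "window s n t = map (\<lambda>i. s ! ((t + i) mod length s)) [0..<n]"

definition orientable :: "nat \<Rightarrow> nat \<Rightarrow> nat list \<Rightarrow> bool" where
  "orientable k n s \<longleftrightarrow> (\<forall>x\<in>set s. x < k) \<and>
     (let ws = map (window s n) [0..<length s] in distinct (ws @ map rev ws))"

definition M_k :: "nat \<Rightarrow> nat \<Rightarrow> nat" where
  "M_k k n = Max {length s | s. orientable k n s}"

end

theory Submission
  imports Defs "HOL-Library.List_Lexorder"
begin


definition Sym :: "nat list \<Rightarrow> bool" where "Sym w \<longleftrightarrow> rev w \<in> rots w"

lemma strings_alt: "strings k n = {xs. set xs \<subseteq> {..<k} \<and> length xs = n}"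
  unfolding strings_def by auto

lemma card_strings: "card (strings k n) = k ^ n"
  unfolding strings_alt by (simp add: card_lists_length_eq)

lemma finite_strings: "finite (strings k n)"
  unfolding strings_alt by (simp add: finite_lists_length_eq)

lemma rots_range: "rots a = range (\<lambda>i. rotate i a)"
proof -
  have "rotate i a \<in> rots a" for i
  proof (cases "a = []")
    case True then show ?thesis by (simp add: rots_def)
  next
    case False
    then have "rotate i a = rotate (i mod length a) a" by (rule_tac rotate_conv_mod)
    moreover have "i mod length a < length a" using False by simp
    ultimately show ?thesis unfolding rots_def by blast
  qed
  moreover have "a = rotate 0 a" by simp
  ultimately show ?thesis unfolding rots_def by blast
qed

lemma rots_self: "a \<in> rots a" by (simp add: rots_def)

lemma rotate_in_rots: "rotate i a \<in> rots a" by (simp add: rots_range)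

lemma rots_trans: assumes "b \<in> rots a" shows "rots b = rots a"
proof -
  obtain i where b: "b = rotate i a" using assms by (auto simp: rots_range)
  have "rotate j b \<in> rots a" for j by (simp add: b rotate_rotate rotate_in_rots)
  moreover have "rotate j a \<in> rots b" for j
  proof (cases "a = []")
    case True then show ?thesis using b by (simp add: rots_self)
  next
    case False
    let ?L = "length a"
    have "rotate (j + (?L - i mod ?L)) b = rotate (j + (?L - i mod ?L) + i) a"
      by (simp add: b rotate_rotate)
    also have "\<dots> = rotate ((j + (?L - i mod ?L) + i) mod ?L) a" by (rule rotate_conv_mod)
    also have "(j + (?L - i mod ?L) + i) mod ?L = j mod ?L"
    proof -
      have "i mod ?L < ?L" using False by simp
      have e: "i = ?L * (i div ?L) + i mod ?L" by simp
      have eq2: "j + (?L - i mod ?L) + i = j + (i div ?L + 1) * ?L"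
        using \<open>i mod ?L < ?L\<close> e by (simp add: algebra_simps, arith)
      show ?thesis by (simp only: eq2 mod_mult_self1)
    qed
    also have "rotate (j mod ?L) a = rotate j a" by (simp add: rotate_conv_mod[symmetric])
    finally show ?thesis by (metis rotate_in_rots)
  qed
  ultimately show ?thesis by (auto simp: rots_range)
qed

lemma rots_sym: "b \<in> rots a \<Longrightarrow> a \<in> rots b"
  using rots_trans rots_self by blast

lemma rots_rev_sub: "rots (rev a) \<subseteq> rev ` rots a"
  by (auto simp: rots_range rotate_rev rotate_in_rots)

lemma rots_rev: "rots (rev a) = rev ` rots a"
proof
  show "rots (rev a) \<subseteq> rev ` rots a" by (rule rots_rev_sub)
  have "rots a \<subseteq> rev ` rots (rev a)" using rots_rev_sub[of "rev a"] by simp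
  then show "rev ` rots a \<subseteq> rots (rev a)" by auto
qed

lemma length_rots: "b \<in> rots a \<Longrightarrow> length b = length a"
  by (auto simp: rots_range)

lemma strings_rotate: "a \<in> strings k n \<Longrightarrow> rotate i a \<in> strings k n"
  by (simp add: strings_def)
lemma strings_rev: "a \<in> strings k n \<Longrightarrow> rev a \<in> strings k n"
  by (simp add: strings_def)
lemma strings_rots: "a \<in> strings k n \<Longrightarrow> b \<in> rots a \<Longrightarrow> b \<in> strings k n"
  by (auto simp: rots_range strings_rotate)

lemma lex_less_iff: "lex_less a b \<longleftrightarrow> a < b"
proof -
  have "(\<exists>zs. zs \<noteq> [] \<and> b = a @ zs) \<longleftrightarrow> (length a < length b \<and> take (length a) b = a)"
    by (metis append_eq_conv_conj append_self_conv length_append less_add_same_cancel1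
        length_greater_0_conv)
  then show ?thesis
    unfolding lex_less_def list_less_def lexord_take_index_conv by auto
qed

lemma lex_le_iff: "lex_le a b \<longleftrightarrow> a \<le> b"
  unfolding lex_le_def lex_less_iff by auto

definition bcls :: "nat list \<Rightarrow> nat list set" where "bcls a = rots a \<union> rots (rev a)"

lemma finite_rots: "finite (rots a)"
  by (simp add: rots_def)

lemma finite_bcls: "finite (bcls a)" by (simp add: bcls_def finite_rots)

lemma bcls_trans: "b \<in> bcls a \<Longrightarrow> bcls b = bcls a"
proof -
  assume "b \<in> bcls a"
  then consider "b \<in> rots a" | "b \<in> rots (rev a)" unfolding bcls_def by blast
  then show ?thesis
  proof cases
    case 1
    then have "rots b = rots a" by (rule rots_trans)
    then have "rots (rev b) = rots (rev a)" by (simp add: rots_rev)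
    then show ?thesis using \<open>rots b = rots a\<close> by (simp add: bcls_def)
  next
    case 2
    then have "rots b = rots (rev a)" by (rule rots_trans)
    then have "rots (rev b) = rots a" by (simp add: rots_rev image_image)
    then show ?thesis using \<open>rots b = rots (rev a)\<close> by (auto simp add: bcls_def)
  qed
qed

lemma bracelet_Min: "is_bracelet a \<longleftrightarrow> a = Min (bcls a)"
proof -
  have "a \<in> bcls a" by (simp add: bcls_def rots_self)
  then show ?thesis
    unfolding is_bracelet_def bcls_def[symmetric] lex_le_iff
    by (metis Min_eqI Min_le finite_bcls)
qed

lemma S_disj: "w \<in> S_set k n \<Longrightarrow> rev w \<in> S_set k n \<Longrightarrow> False"
proof -
  assume w: "w \<in> S_set k n" and r: "rev w \<in> S_set k n"
  obtain a where a: "a \<in> asym_bracelets k n" "w \<in> rots a" using w by (auto simp: S_set_def)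
  obtain b where b: "b \<in> asym_bracelets k n" "rev w \<in> rots b" using r by (auto simp: S_set_def)
  have "bcls a = bcls w" using a(2) by (metis UnI1 bcls_def bcls_trans rots_sym)
  moreover have "bcls b = bcls (rev w)" using b(2) by (metis UnI1 bcls_def bcls_trans rots_sym)
  moreover have "bcls (rev w) = bcls w" unfolding bcls_def by auto
  ultimately have "bcls a = bcls b" by simp
  then have "a = b" using a(1) b(1) by (simp add: asym_bracelets_def bracelet_Min)
  then have "rots (rev w) = rots a" "rots w = rots a" using a b rots_trans by auto
  then have "rots (rev a) = rots a" by (simp add: rots_rev)
  then have "rev a \<in> rots a" using rots_self by metis
  then show False using a(1) by (simp add: asym_bracelets_def asymmetric_necklace_def)
qed

lemma S_sub: "S_set k n \<subseteq> strings k n"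
  by (auto simp: S_set_def asym_bracelets_def strings_rots)

lemma L_upper: "2 * L_k k n \<le> k ^ n"
proof -
  have "S_set k n \<inter> rev ` S_set k n = {}" using S_disj by auto
  moreover have ce: "card (rev ` S_set k n) = card (S_set k n)" by (simp add: card_image)
  moreover have "S_set k n \<union> rev ` S_set k n \<subseteq> strings k n" using S_sub by (auto intro: strings_rev)
  moreover have "finite (S_set k n)" using S_sub finite_strings finite_subset by blast
  ultimately have "card (S_set k n) + card (rev ` S_set k n) \<le> card (strings k n)"
    by (metis card_Un_disjoint card_mono finite_imageI finite_strings)
  then show ?thesis using ce by (simp add: L_k_def card_strings)
qed

lemma nonSym_cover: assumes "w \<in> strings k n" "\<not> Sym w" shows "w \<in> S_set k n \<union> rev ` S_set k n"
proof -
  define b where "b = Min (bcls w)"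
  have bin: "b \<in> bcls w" unfolding b_def
    by (metis Min_in UnI1 bcls_def empty_iff finite_bcls rots_self)
  then have cb: "bcls b = bcls w" by (rule bcls_trans)
  have brac: "is_bracelet b" using cb by (simp add: bracelet_Min b_def)
  have neck: "is_necklace b" using brac unfolding is_bracelet_def is_necklace_def by auto
  have bs: "b \<in> strings k n" using bin assms(1) unfolding bcls_def
    by (auto intro: strings_rots strings_rev)
  have asym: "rev b \<notin> rots b"
  proof
    assume rb: "rev b \<in> rots b"
    show False
    proof (cases "b \<in> rots w")
      case True
      then have "rots b = rots w" by (rule rots_trans)
      then have "rev b \<in> rots w" "rev b \<in> rots (rev w)" using rb True
        by (auto simp: rots_rev)
      then have "rots w = rots (rev w)" by (metis rots_trans)
      then show False using assms(2) rots_self Sym_def by metis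
    next
      case False
      then have bb: "b \<in> rots (rev w)" using bin by (simp add: bcls_def)
      then have "rots b = rots (rev w)" by (rule rots_trans)
      then have "rev b \<in> rots (rev w)" "rev b \<in> rots w" using rb bb
        by (auto simp: rots_rev)
      then have "rots w = rots (rev w)" by (metis rots_trans)
      then show False using assms(2) rots_self Sym_def by metis
    qed
  qed
  have bA: "b \<in> asym_bracelets k n"
    using brac neck bs asym by (simp add: asym_bracelets_def asymmetric_necklace_def)
  show ?thesis
  proof (cases "b \<in> rots w")
    case True
    then have "w \<in> rots b" by (rule rots_sym)
    then show ?thesis using bA by (auto simp: S_set_def)
  next
    case False
    then have "b \<in> rots (rev w)" using bin by (simp add: bcls_def)
    then have "rev w \<in> rots b" by (rule rots_sym)
    then have "rev w \<in> S_set k n" using bA by (auto simp: S_set_def)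
    then show ?thesis by (metis UnI2 image_eqI rev_rev_ident)
  qed
qed

lemma L_lower: "k ^ n \<le> 2 * L_k k n + card {w \<in> strings k n. Sym w}"
proof -
  have fS: "finite (S_set k n)" using S_sub finite_strings finite_subset by blast
  have "strings k n \<subseteq> S_set k n \<union> rev ` S_set k n \<union> {w \<in> strings k n. Sym w}"
    using nonSym_cover by blast
  then have "card (strings k n) \<le> card (S_set k n \<union> rev ` S_set k n \<union> {w \<in> strings k n. Sym w})"
    by (rule card_mono[rotated]) (simp add: fS finite_strings)
  also have "\<dots> \<le> card (S_set k n) + card (rev ` S_set k n) + card {w \<in> strings k n. Sym w}"
    by (meson card_Un_le le_trans add_le_mono order_refl)
  also have "\<dots> \<le> 2 * L_k k n + card {w \<in> strings k n. Sym w}"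
    by (simp add: L_k_def card_image_le fS)
  finally show ?thesis by (simp add: card_strings)
qed



definition hf :: "nat \<Rightarrow> nat" where "hf t = (if t = 0 then 0 else (t - 1) mod 3)"
definition zz :: "nat \<Rightarrow> nat list \<Rightarrow> nat list" where "zz j w = map hf [0..<j] @ drop j w"
definition Per :: "nat list \<Rightarrow> bool" where "Per w \<longleftrightarrow> (\<exists>d. 0 < d \<and> d < length w \<and> rotate d w = w)"
definition pal :: "nat list \<Rightarrow> bool" where "pal x \<longleftrightarrow> rev x = x"

lemma hf_lt: "hf t < 3" by (simp add: hf_def)

lemma m3: "(x::nat) mod 3 = 0 \<or> x mod 3 = 1 \<or> x mod 3 = 2" by arith
lemma modc: "((x::nat) + y) mod 3 = x mod 3 \<Longrightarrow> y mod 3 = 0"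
  using mod_eq_dvd_iff_nat[of x "x+y" 3] by (simp add: eq_commute)
lemma mod3a: "\<not> ((x::nat) mod 3 = (x + m + 3) mod 3 \<and> (x+1) mod 3 = (x + m + 2) mod 3)" 
proof
  assume a: "x mod 3 = (x + m + 3) mod 3 \<and> (x+1) mod 3 = (x + m + 2) mod 3"
  have "(m+3) mod 3 = 0" using a modc[of x "m+3"] by (simp add: add.assoc)
  moreover have "(m+1) mod 3 = 0" using a modc[of "x+1" "m+1"] by (simp add: algebra_simps)
  ultimately show False using m3[of m] by (auto simp: mod_Suc)
qed
lemma mod3b: "\<not> (((m::nat)+2) mod 3 = 0 \<and> (m+1) mod 3 = 0)" using m3[of m] by (auto simp add: mod_Suc)
lemma mod3c: "(x::nat) mod 3 \<noteq> (x + 2) mod 3" using m3[of x] by (auto simp add: mod_Suc)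

lemma NP: assumes "3 \<le> m" shows "\<exists>t<m. hf (a+t) \<noteq> hf (a+m-1-t)"
proof (cases "m = 3")
  case True
  have "hf a \<noteq> hf (a+2)"
  proof (cases "a = 0")
    case True then show ?thesis by (simp add: hf_def)
  next
    case False
    then obtain x where x: "a = Suc x" by (cases a) auto
    show ?thesis using mod3c[of x] by (simp add: hf_def x)
  qed
  then show ?thesis using True by (rule_tac x=0 in exI) simp
next
  case False
  then have "m \<ge> 4" using assms by simp
  then obtain y where y: "m = y + 4" by (metis add.commute le_Suc_ex)
  have "\<not> (hf a = hf (a+m-1) \<and> hf (a+1) = hf (a+m-2))"
  proof (cases "a = 0")
    case True
    then show ?thesis using mod3b[of y] by (simp add: hf_def y)
  next
    case False
    then obtain x where x: "a = Suc x" by (cases a) auto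
    have e1: "a + m - 1 = Suc (x + y + 3)" "a + m - 2 = Suc (x + y + 2)" by (simp_all add: x y)
    show ?thesis using mod3a[of x y] unfolding e1 by (simp add: hf_def x)
  qed
  then consider "hf a \<noteq> hf (a+m-1)" | "hf (a+1) \<noteq> hf (a+m-2)" by blast
  then show ?thesis
  proof cases
    case 1 then show ?thesis using y by (rule_tac x=0 in exI) simp
  next
    case 2
    have "a + m - 1 - 1 = a + m - 2" by simp
    then show ?thesis using 2 y by (rule_tac x=1 in exI) simp
  qed
qed

lemma NP': assumes "3 \<le> m" "a + m \<le> j" "\<forall>t<j. z ! t = hf t"
  "\<forall>t<m. z ! (a+t) = z ! (a+m-1-t)" shows False
proof -
  obtain t where t: "t < m" "hf (a+t) \<noteq> hf (a+m-1-t)" using NP assms(1) by blast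
  have "z ! (a+t) = hf (a+t)" "z ! (a+m-1-t) = hf (a+m-1-t)" using assms(2,3) t(1) by auto
  then show False using t assms(4) by auto
qed

lemma length_zz: "length w = n \<Longrightarrow> j \<le> n \<Longrightarrow> length (zz j w) = n"
  by (simp add: zz_def)

lemma nth_zz: "length w = n \<Longrightarrow> j \<le> n \<Longrightarrow> t < n \<Longrightarrow> zz j w ! t = (if t < j then hf t else w ! t)"
  by (simp add: zz_def nth_append)

lemma zz_strings: assumes "w \<in> strings k n" "j \<le> n" "3 \<le> k" shows "zz j w \<in> strings k n"
proof -
  have "\<forall>x\<in>set (map hf [0..<j]). x < k" using hf_lt assms(3) by (auto intro: less_le_trans)
  moreover have "\<forall>x\<in>set (drop j w). x < k" using assms(1) by (auto simp: strings_def dest: in_set_dropD)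
  ultimately show ?thesis using assms by (auto simp: strings_def zz_def)
qed

lemma Sym_split: assumes "Sym z" shows "\<exists>i\<le>length z. pal (take i z) \<and> pal (drop i z)"
proof -
  obtain m where m: "rev z = rotate m z" using assms by (auto simp: Sym_def rots_range)
  define i where "i = m mod length z"
  show ?thesis
  proof (cases "z = []")
    case True then show ?thesis by (auto simp: pal_def)
  next
    case False
    then have il: "i \<le> length z" by (simp add: i_def less_imp_le)
    have "rev z = drop i z @ take i z" using m by (simp add: rotate_drop_take i_def)
    moreover have "rev z = rev (drop i z) @ rev (take i z)"
      by (metis append_take_drop_id rev_append)
    ultimately have "drop i z @ take i z = rev (drop i z) @ rev (take i z)" by simp
    then have "drop i z = rev (drop i z) \<and> take i z = rev (take i z)"
      by (simp add: append_eq_append_conv)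
    then show ?thesis using il by (auto simp: pal_def)
  qed
qed

lemma pal_nth: "pal x \<Longrightarrow> t < length x \<Longrightarrow> x ! t = x ! (length x - 1 - t)"
  unfolding pal_def by (metis diff_Suc_eq_diff_pred diff_commute rev_nth)

lemma pal_det: assumes "length x = length y" "pal x" "pal y"
  "take ((length x + 1) div 2) x = take ((length x + 1) div 2) y" shows "x = y"
proof (rule nth_equalityI)
  show "length x = length y" by fact
  fix t assume t: "t < length x"
  let ?c = "(length x + 1) div 2"
  show "x ! t = y ! t"
  proof (cases "t < ?c")
    case True
    then show ?thesis using assms(4) by (metis nth_take)
  next
    case False
    have l: "length x - 1 - t < ?c" using False t by linarith
    have "x ! t = x ! (length x - 1 - t)" using pal_nth assms(2) t by blast
    also have "\<dots> = y ! (length x - 1 - t)" using assms(4) l by (metis nth_take)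
    also have "\<dots> = y ! t" using pal_nth[OF assms(3)] t assms(1) by metis
    finally show ?thesis .
  qed
qed

lemma take_zz: "take c (zz j w) = take c (map hf [0..<j]) @ take (c - j) (drop j w)"
  by (simp add: zz_def)

lemma drop_zz: "drop i (zz j w) = map hf [i..<j] @ drop (i - j) (drop j w)"
  by (simp add: zz_def drop_map)

lemma drop_zz_j: "drop j (zz j w) = drop j w"
  by (simp add: zz_def)

lemma zz_pal_take: assumes "length w = n" "j \<le> n" "i \<le> n" "pal (take i (zz j w))" "t < i"
  shows "zz j w ! t = zz j w ! (i - 1 - t)"
proof -
  have l: "length (take i (zz j w)) = i" using assms length_zz by simp
  have "take i (zz j w) ! t = take i (zz j w) ! (length (take i (zz j w)) - 1 - t)"
    by (rule pal_nth[OF assms(4)]) (use assms length_zz[OF assms(1,2)] in simp)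
  then have "take i (zz j w) ! t = take i (zz j w) ! (i - 1 - t)" by (simp only: l)
  moreover have "i - 1 - t < i" using assms(5) by simp
  ultimately show ?thesis using assms(5) by (simp only: nth_take)
qed

lemma zz_pal_drop: assumes "length w = n" "j \<le> n" "i \<le> n" "pal (drop i (zz j w))" "t < n - i"
  shows "zz j w ! (i + t) = zz j w ! (n - 1 - t)"
proof -
  have l: "length (drop i (zz j w)) = n - i" using assms length_zz by simp
  have "drop i (zz j w) ! t = drop i (zz j w) ! (length (drop i (zz j w)) - 1 - t)"
    by (rule pal_nth[OF assms(4)]) (use assms length_zz[OF assms(1,2)] in simp)
  then have "drop i (zz j w) ! t = drop i (zz j w) ! (n - i - 1 - t)" by (simp only: l)
  moreover have "i + (n - i - 1 - t) = n - 1 - t" using assms by simp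
  moreover have "drop i (zz j w) ! t = zz j w ! (i + t)" "drop i (zz j w) ! (n - i - 1 - t) = zz j w ! (i + (n - i - 1 - t))"
    using assms length_zz by (simp_all add: nth_drop)
  ultimately show ?thesis by metis
qed

lemma zz_hf: "length w = n \<Longrightarrow> j \<le> n \<Longrightarrow> t < j \<Longrightarrow> zz j w ! t = hf t"
  by (simp add: nth_zz)

lemma card_strings_prod: "card (strings k a \<times> strings k b \<times> strings k c) = k ^ (a + b + c)"
  by (simp add: card_cartesian_product card_strings power_add)

lemma card_symB: assumes jn: "j \<le> n" and iN: "i \<le> n" and k1: "k \<ge> 1"
  shows "card {w \<in> strings k n. pal (take i (zz j w)) \<and> pal (drop i (zz j w))} \<le> k ^ (n div 2 + 3)"
proof -
  define B where "B = {w \<in> strings k n. pal (take i (zz j w)) \<and> pal (drop i (zz j w))}"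
  define c where "c = (i + 1) div 2"
  define b where "b = (n - i + 1) div 2"
  show ?thesis
  proof (cases "B = {}")
    case True then show ?thesis by (simp add: B_def[symmetric])
  next
    case False
    then obtain w0 where w0: "w0 \<in> B" by blast
    have lw0: "length w0 = n" using w0 by (simp add: B_def strings_def)
    have pw0: "pal (take i (zz j w0))" "pal (drop i (zz j w0))" using w0 by (simp_all add: B_def)
    have px: "\<forall>t<i. zz j w0 ! t = zz j w0 ! (i - 1 - t)"
      by (intro allI impI zz_pal_take[OF lw0 jn iN pw0(1)])
    have py: "\<forall>t<n - i. zz j w0 ! (i + t) = zz j w0 ! (n - 1 - t)"
      by (intro allI impI zz_pal_drop[OF lw0 jn iN pw0(2)])
    have hz: "\<forall>t<j. zz j w0 ! t = hf t" using zz_hf[OF lw0 jn] by simp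
    have c2: "2 * c \<le> i + 1" "c \<le> i + 1" "i \<le> 2 * c" unfolding c_def by linarith+
    have b2: "2 * b \<le> n - i + 1" unfolding b_def by linarith
    have n2: "n \<le> 2 * (n div 2) + 1" by linarith
    have expo: "j + (c - j) + (b - (j - i)) \<le> n div 2 + 3"
    proof (cases "j \<le> c")
      case True
      have "c \<le> i"
      proof (cases "i = 0")
        case True then show ?thesis by (simp add: c_def)
      next
        case False then show ?thesis using c2 by linarith
      qed
      then show ?thesis using True c2 b2 n2 iN by linarith
    next
      case jc: False
      show ?thesis
      proof (cases "j \<le> i")
        case True
        have "j \<le> c + 1"
        proof (rule ccontr)
          assume "\<not> j \<le> c + 1"
          then have m3: "3 \<le> 2 * j - i" using c2 unfolding c_def by linarith
          show False
          proof (rule NP'[OF m3 _ hz])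
            show "i - j + (2 * j - i) \<le> j" using True jc c2 by linarith
            show "\<forall>t<2 * j - i. zz j w0 ! (i - j + t) = zz j w0 ! (i - j + (2 * j - i) - 1 - t)"
            proof (intro allI impI)
              fix t assume t: "t < 2 * j - i"
              have "i - j + t < i" using t True by linarith
              then have "zz j w0 ! (i - j + t) = zz j w0 ! (i - 1 - (i - j + t))" using px by blast
              moreover have "i - 1 - (i - j + t) = i - j + (2 * j - i) - 1 - t" using t True by linarith
              ultimately show "zz j w0 ! (i - j + t) = zz j w0 ! (i - j + (2 * j - i) - 1 - t)" by simp
            qed
          qed
        qed
        then show ?thesis using True jc c2 b2 n2 iN by linarith
      next
        case False
        have i2: "i \<le> 2"
        proof (rule ccontr)
          assume "\<not> i \<le> 2"
          then have m3: "3 \<le> i" by simp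
          show False
          proof (rule NP'[OF m3 _ hz, of 0])
            show "0 + i \<le> j" using False by simp
            show "\<forall>t<i. zz j w0 ! (0 + t) = zz j w0 ! (0 + i - 1 - t)" unfolding add_0_left by (rule px)
          qed
        qed
        have jb: "j \<le> n div 2 + 3"
        proof (rule ccontr)
          assume "\<not> j \<le> n div 2 + 3"
          then have m3: "3 \<le> 2 * j - n - i" using i2 n2 by linarith
          show False
          proof (rule NP'[OF m3 _ hz, of "n - j + i"])
            show "n - j + i + (2 * j - n - i) \<le> j" using jn i2 m3 by linarith
            show "\<forall>t<2 * j - n - i. zz j w0 ! (n - j + i + t) = zz j w0 ! (n - j + i + (2 * j - n - i) - 1 - t)"
            proof (intro allI impI)
              fix t assume t: "t < 2 * j - n - i"
              have "n - j + t < n - i" using t jn by linarith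
              then have "zz j w0 ! (i + (n - j + t)) = zz j w0 ! (n - 1 - (n - j + t))" using py by blast
              moreover have "i + (n - j + t) = n - j + i + t" using jn by simp
              moreover have "n - 1 - (n - j + t) = n - j + i + (2 * j - n - i) - 1 - t" using t jn by linarith
              ultimately show "zz j w0 ! (n - j + i + t) = zz j w0 ! (n - j + i + (2 * j - n - i) - 1 - t)" by simp
            qed
          qed
        qed
        have "c \<le> j" using c2 False by linarith
        then show ?thesis using False jb i2 c2 b2 n2 iN by linarith
      qed
    qed
    define f where "f w = (take j w, take (c - j) (drop j w), take (b - (j - i)) (drop (i - j) (drop j w)))" for w :: "nat list"
    have inj: "inj_on f B"
    proof (rule inj_onI)
      fix w w' assume w: "w \<in> B" and w': "w' \<in> B" and fe: "f w = f w'"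
      have lw: "length w = n" "length w' = n" using w w' by (simp_all add: B_def strings_def)
      have e1: "take j w = take j w'" and e2: "take (c - j) (drop j w) = take (c - j) (drop j w')"
        and e3: "take (b - (j - i)) (drop (i - j) (drop j w)) = take (b - (j - i)) (drop (i - j) (drop j w'))"
        using fe by (simp_all add: f_def)
      have ci: "c \<le> i"
      proof (cases "i = 0")
        case True then show ?thesis by (simp add: c_def)
      next
        case False then show ?thesis using c2 by linarith
      qed
      have "take i (zz j w) = take i (zz j w')"
      proof (rule pal_det)
        show "length (take i (zz j w)) = length (take i (zz j w'))" using lw length_zz jn by simp
        show "pal (take i (zz j w))" "pal (take i (zz j w'))" using w w' by (simp_all add: B_def)
        have "take ((length (take i (zz j w)) + 1) div 2) (take i (zz j w)) = take c (zz j w)"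
          using lw length_zz jn iN ci by (simp add: c_def min_def)
        moreover have "take ((length (take i (zz j w)) + 1) div 2) (take i (zz j w')) = take c (zz j w')"
          using lw length_zz jn iN ci by (simp add: c_def min_def)
        moreover have "take c (zz j w) = take c (zz j w')" using e2 by (simp add: take_zz)
        ultimately show "take ((length (take i (zz j w)) + 1) div 2) (take i (zz j w)) =
            take ((length (take i (zz j w)) + 1) div 2) (take i (zz j w'))" by simp
      qed
      moreover have "drop i (zz j w) = drop i (zz j w')"
      proof (rule pal_det)
        show "length (drop i (zz j w)) = length (drop i (zz j w'))" using lw length_zz jn by simp
        show "pal (drop i (zz j w))" "pal (drop i (zz j w'))" using w w' by (simp_all add: B_def)
        have "(length (drop i (zz j w)) + 1) div 2 = b" using lw length_zz jn by (simp add: b_def)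
        moreover have "take b (drop i (zz j w)) = take b (drop i (zz j w'))"
          using e3 by (simp add: drop_zz)
        ultimately show "take ((length (drop i (zz j w)) + 1) div 2) (drop i (zz j w)) =
            take ((length (drop i (zz j w)) + 1) div 2) (drop i (zz j w'))" by simp
      qed
      ultimately have "zz j w = zz j w'" by (metis append_take_drop_id)
      then have "drop j w = drop j w'" by (metis drop_zz_j)
      then show "w = w'" using e1 by (metis append_take_drop_id)
    qed
    define l2 where "l2 = min (c - j) (n - j)"
    define l3 where "l3 = min (n - (i - j + j)) (b - (j - i))"
    have img: "f ` B \<subseteq> strings k j \<times> strings k l2 \<times> strings k l3"
    proof
      fix p assume "p \<in> f ` B"
      then obtain w where w: "w \<in> B" "p = f w" by blast
      have lw: "length w = n" and sw: "\<forall>x\<in>set w. x < k" using w by (simp_all add: B_def strings_def)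
      have "\<forall>x\<in>set (drop j w). x < k" using sw by (auto dest: in_set_dropD)
      moreover have "\<forall>x\<in>set (drop (i - j) (drop j w)). x < k" using sw by (auto dest: in_set_dropD)
      ultimately show "p \<in> strings k j \<times> strings k l2 \<times> strings k l3"
        using w lw sw jn by (auto simp: f_def strings_def l2_def l3_def dest: in_set_takeD)
    qed
    have "card B \<le> card (strings k j \<times> strings k l2 \<times> strings k l3)"
      using card_inj_on_le[OF inj img] finite_strings by (simp add: finite_cartesian_product)
    also have "\<dots> = k ^ (j + l2 + l3)" by (rule card_strings_prod)
    also have "\<dots> \<le> k ^ (n div 2 + 3)"
    proof (rule power_increasing)
      have "l2 \<le> c - j" "l3 \<le> b - (j - i)" by (simp_all add: l2_def l3_def)
      then show "j + l2 + l3 \<le> n div 2 + 3" using expo by linarith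
    qed (use k1 in simp)
    finally show ?thesis by (simp add: B_def)
  qed
qed

lemma per_mod: assumes "rotate d z = z" "0 < d" shows "t < length z \<Longrightarrow> z ! t = z ! (t mod d)"
proof (induction t rule: less_induct)
  case (less t)
  show ?case
  proof (cases "t < d")
    case True then show ?thesis by simp
  next
    case False
    have "rotate d z ! (t - d) = z ! ((d + (t - d)) mod length z)"
      using less.prems by (intro nth_rotate) simp
    then have "z ! (t - d) = z ! t" using assms(1) False less.prems by simp
    moreover have "z ! (t - d) = z ! ((t - d) mod d)" using less.IH[of "t - d"] False less.prems assms(2) by simp
    moreover have "(t - d) mod d = t mod d" using False by (simp add: le_mod_geq)
    ultimately show ?thesis by simp
  qed
qed

lemma Per_half: assumes "Per z" shows "\<exists>d. 0 < d \<and> d \<le> length z div 2 \<and> rotate d z = z"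
proof -
  obtain d where d: "0 < d" "d < length z" "rotate d z = z" using assms by (auto simp: Per_def)
  show ?thesis
  proof (cases "d \<le> length z div 2")
    case True then show ?thesis using d by blast
  next
    case False
    have "rotate (length z - d) z = rotate (length z - d) (rotate d z)" by (simp only: d(3))
    also have "\<dots> = rotate (length z) z"
    proof -
      have "length z - d + d = length z" using d(2) by simp
      then show ?thesis by (simp only: rotate_rotate)
    qed
    also have "\<dots> = z" by (simp add: rotate_conv_mod[of "length z"])
    finally show ?thesis using False d by (rule_tac x="length z - d" in exI) auto
  qed
qed

lemma card_strings_prod2: "card (strings k a \<times> strings k b) = k ^ (a + b)"
  by (simp add: card_cartesian_product card_strings power_add)

lemma card_perB: assumes jn: "j \<le> n" and d0: "0 < d" and dn: "d \<le> n div 2" and k1: "k \<ge> 1"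
  shows "card {w \<in> strings k n. rotate d (zz j w) = zz j w} \<le> k ^ (n div 2 + 3)"
proof -
  define B where "B = {w \<in> strings k n. rotate d (zz j w) = zz j w}"
  show ?thesis
  proof (cases "B = {}")
    case True then show ?thesis by (simp add: B_def[symmetric])
  next
    case False
    then obtain w0 where w0: "w0 \<in> B" by blast
    have lw0: "length w0 = n" using w0 by (simp add: B_def strings_def)
    have pm: "\<And>t. t < n \<Longrightarrow> zz j w0 ! t = zz j w0 ! (t mod d)"
      using per_mod[of d "zz j w0"] w0 d0 length_zz[OF lw0 jn] by (simp add: B_def)
    have expo: "j + (d - j) \<le> n div 2 + 3"
    proof (cases "j \<le> d + 1")
      case True then show ?thesis using dn by linarith
    next
      case False
      have h0: "hf d = hf 0"
        using pm[of d] zz_hf[OF lw0 jn, of d] zz_hf[OF lw0 jn, of 0] False jn d0 by simp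
      have h1: "hf (d + 1) = hf ((d + 1) mod d)"
        using pm[of "d+1"] zz_hf[OF lw0 jn, of "d+1"] zz_hf[OF lw0 jn, of "(d+1) mod d"] False jn d0
        by (simp add: less_trans[OF mod_less_divisor])
      show ?thesis
      proof (cases "d = 1")
        case True then show ?thesis using h1 by (simp add: hf_def)
      next
        case False
        then have "(d + 1) mod d = 1" using d0 by (simp add: mod_Suc)
        then have h2: "hf (d+1) = 0" using h1 by (simp add: hf_def)
        obtain x where x: "d = Suc x" using d0 by (cases d) auto
        have "x mod 3 = 0" "(x + 1) mod 3 = 0" using h0 h2 by (simp_all add: hf_def x)
        then have "1 mod (3::nat) = 0" using modc[of x 1] by simp
        then show ?thesis by simp
      qed
    qed
    define f where "f w = (take j w, take (d - j) (drop j w))" for w :: "nat list"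
    have inj: "inj_on f B"
    proof (rule inj_onI)
      fix w w' assume w: "w \<in> B" and w': "w' \<in> B" and fe: "f w = f w'"
      have lw: "length w = n" "length w' = n" using w w' by (simp_all add: B_def strings_def)
      have e1: "take j w = take j w'" and e2: "take (d - j) (drop j w) = take (d - j) (drop j w')"
        using fe by (simp_all add: f_def)
      have td: "take d (zz j w) = take d (zz j w')" using e2 by (simp add: take_zz)
      have "zz j w = zz j w'"
      proof (rule nth_equalityI)
        show "length (zz j w) = length (zz j w')" using lw length_zz jn by simp
        fix t assume t: "t < length (zz j w)"
        then have tn: "t < n" using lw length_zz jn by simp
        have md: "t mod d < d" using d0 by simp
        have "zz j w ! t = zz j w ! (t mod d)"
          using per_mod[of d "zz j w" t] w d0 t by (simp add: B_def)
        also have "\<dots> = take d (zz j w) ! (t mod d)" using md by simp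
        also have "\<dots> = take d (zz j w') ! (t mod d)" using td by simp
        also have "\<dots> = zz j w' ! (t mod d)" using md by simp
        also have "\<dots> = zz j w' ! t"
          using per_mod[of d "zz j w'" t] w' d0 tn lw length_zz jn by (simp add: B_def)
        finally show "zz j w ! t = zz j w' ! t" .
      qed
      then have "drop j w = drop j w'" by (metis drop_zz_j)
      then show "w = w'" using e1 by (metis append_take_drop_id)
    qed
    define l2 where "l2 = min (d - j) (n - j)"
    have img: "f ` B \<subseteq> strings k j \<times> strings k l2"
    proof
      fix p assume "p \<in> f ` B"
      then obtain w where w: "w \<in> B" "p = f w" by blast
      have lw: "length w = n" and sw: "\<forall>x\<in>set w. x < k" using w by (simp_all add: B_def strings_def)
      have "\<forall>x\<in>set (drop j w). x < k" using sw by (auto dest: in_set_dropD)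
      then show "p \<in> strings k j \<times> strings k l2"
        using w lw sw jn by (auto simp: f_def strings_def l2_def dest: in_set_takeD)
    qed
    have "card B \<le> card (strings k j \<times> strings k l2)"
      using card_inj_on_le[OF inj img] finite_strings by (simp add: finite_cartesian_product)
    also have "\<dots> = k ^ (j + l2)" by (rule card_strings_prod2)
    also have "\<dots> \<le> k ^ (n div 2 + 3)"
    proof (rule power_increasing)
      have "l2 \<le> d - j" by (simp add: l2_def)
      then show "j + l2 \<le> n div 2 + 3" using expo by linarith
    qed (use k1 in simp)
    finally show ?thesis by (simp add: B_def)
  qed
qed

definition bad :: "nat \<Rightarrow> nat \<Rightarrow> nat list set" where
  "bad k n = {w \<in> strings k n. \<exists>j\<le>n. Sym (zz j w) \<or> Per (zz j w)}"

lemma card_bad: assumes k1: "k \<ge> 1"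
  shows "card (bad k n) \<le> (n + 1) * (2 * n + 1) * k ^ (n div 2 + 3)"
proof -
  define K where "K = k ^ (n div 2 + 3)"
  define SB where "SB j i = {w \<in> strings k n. pal (take i (zz j w)) \<and> pal (drop i (zz j w))}" for j i
  define PB where "PB j d = {w \<in> strings k n. rotate d (zz j w) = zz j w}" for j d
  define U where "U j = (\<Union>i\<in>{..n}. SB j i) \<union> (\<Union>d\<in>{1..n div 2}. PB j d)" for j
  have sub: "bad k n \<subseteq> (\<Union>j\<in>{..n}. U j)"
  proof
    fix w assume w: "w \<in> bad k n"
    then obtain j where j: "j \<le> n" "Sym (zz j w) \<or> Per (zz j w)" and ws: "w \<in> strings k n"
      by (auto simp: bad_def)
    have lz: "length (zz j w) = n" using ws j length_zz by (simp add: strings_def)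
    show "w \<in> (\<Union>j\<in>{..n}. U j)"
      using j(2)
    proof
      assume "Sym (zz j w)"
      then obtain i where "i \<le> n" "pal (take i (zz j w)) \<and> pal (drop i (zz j w))"
        using Sym_split lz by metis
      then have "w \<in> SB j i" using ws by (simp add: SB_def)
      then show ?thesis using j(1) \<open>i \<le> n\<close> by (auto simp: U_def)
    next
      assume "Per (zz j w)"
      then obtain d where "0 < d" "d \<le> n div 2" "rotate d (zz j w) = zz j w"
        using Per_half lz by metis
      then have "w \<in> PB j d" "d \<in> {1..n div 2}" using ws by (auto simp: PB_def)
      then show ?thesis using j(1) unfolding U_def by blast
    qed
  qed
  have cU: "card (U j) \<le> (2 * n + 1) * K" if "j \<le> n" for j
  proof -
    have "card (U j) \<le> card (\<Union>i\<in>{..n}. SB j i) + card (\<Union>d\<in>{1..n div 2}. PB j d)"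
      unfolding U_def by (rule card_Un_le)
    also have "card (\<Union>i\<in>{..n}. SB j i) \<le> (\<Sum>i\<in>{..n}. card (SB j i))" by (rule card_UN_le) simp
    also have "\<dots> \<le> (\<Sum>i\<in>{..n}. K)"
      using card_symB[OF that _ k1] by (intro sum_mono) (simp add: SB_def K_def)
    also have "card (\<Union>d\<in>{1..n div 2}. PB j d) \<le> (\<Sum>d\<in>{1..n div 2}. card (PB j d))"
      by (rule card_UN_le) simp
    also have "\<dots> \<le> (\<Sum>d\<in>{1..n div 2}. K)"
      using card_perB[OF that _ _ k1] by (intro sum_mono) (simp add: PB_def K_def)
    finally have "card (U j) \<le> (n + 1) * K + (n div 2) * K" by simp
    also have "\<dots> \<le> (n + 1) * K + n * K" by (simp add: mult_right_mono)
    also have "\<dots> = (2 * n + 1) * K" by (simp add: algebra_simps)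
    finally show ?thesis .
  qed
  have "card (bad k n) \<le> card (\<Union>j\<in>{..n}. U j)"
    by (rule card_mono[OF _ sub]) (simp add: U_def SB_def PB_def finite_strings)
  also have "\<dots> \<le> (\<Sum>j\<in>{..n}. card (U j))" by (rule card_UN_le) simp
  also have "\<dots> \<le> (\<Sum>j\<in>{..n}. (2 * n + 1) * K)" using cU by (intro sum_mono) simp
  also have "\<dots> = (n + 1) * (2 * n + 1) * K" by (simp add: algebra_simps)
  finally show ?thesis by (simp add: K_def)
qed



definition W :: "nat \<Rightarrow> nat list \<Rightarrow> nat list set" where
  "W n s = window s n ` {..<length s}"

definition valid :: "nat \<Rightarrow> nat \<Rightarrow> nat list \<Rightarrow> bool" where
  "valid k n s \<longleftrightarrow> (\<forall>x\<in>set s. x < k) \<and> n \<le> length s \<and> distinct (map (window s n) [0..<length s])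
     \<and> (\<forall>w\<in>W n s. \<forall>i. rotate i w \<in> W n s) \<and> (\<forall>w\<in>W n s. rev w \<notin> W n s)"

lemma set_wins: "set (map (window s n) [0..<length s]) = W n s"
  by (auto simp: W_def)

lemma length_window[simp]: "length (window s n t) = n" by (simp add: window_def)

lemma nth_window: "i < n \<Longrightarrow> window s n t ! i = s ! ((t + i) mod length s)"
  by (simp add: window_def)

lemma window_mod: "window s n (t mod length s) = window s n t"
  by (rule nth_equalityI) (simp_all add: nth_window mod_add_left_eq)

lemma window_rotate: assumes "0 < length s" shows "window (rotate r s) n u = window s n (u + r)"
proof (rule nth_equalityI)
  fix i assume i: "i < length (window (rotate r s) n u)"
  have "rotate r s ! ((u + i) mod length s) = s ! ((r + (u + i) mod length s) mod length s)"
    using assms by (intro nth_rotate) simp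
  also have "\<dots> = s ! ((u + r + i) mod length s)" by (simp add: mod_add_right_eq add_ac)
  finally show "window (rotate r s) n u ! i = window s n (u + r) ! i" using i by (simp add: nth_window)
qed simp

lemma W_rotate: assumes "0 < length s" shows "W n (rotate r s) = W n s"
proof
  show "W n (rotate r s) \<subseteq> W n s"
  proof
    fix w assume "w \<in> W n (rotate r s)"
    then obtain u where "u < length s" "w = window (rotate r s) n u" by (auto simp: W_def)
    then have "w = window s n ((u + r) mod length s)" using assms by (simp add: window_rotate window_mod)
    then show "w \<in> W n s" using assms by (auto simp: W_def)
  qed
  show "W n s \<subseteq> W n (rotate r s)"
  proof
    fix w assume "w \<in> W n s"
    then obtain t where t: "t < length s" "w = window s n t" by (auto simp: W_def)
    define L where "L = length s"
    define u where "u = (t + (L - r mod L)) mod L"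
    have "(u + r) mod L = (t + (L - r mod L) + r) mod L" by (simp add: u_def mod_add_left_eq)
    also have "\<dots> = (t + (L - r mod L) + r mod L) mod L" by (simp add: mod_add_right_eq)
    also have "\<dots> = (t + L) mod L"
    proof -
      have "r mod L < L" using assms by (simp add: L_def)
      then have "t + (L - r mod L) + r mod L = t + L" by arith
      then show ?thesis by simp
    qed
    also have "\<dots> = t" using t by (simp add: L_def)
    finally have "window (rotate r s) n u = w" using assms t
      by (metis L_def window_mod window_rotate)
    moreover have "u < length s" using assms by (simp add: u_def L_def)
    ultimately show "w \<in> W n (rotate r s)" by (auto simp: W_def)
  qed
qed

lemma W_strings: assumes "\<forall>x\<in>set s. x < k" "w \<in> W n s" shows "w \<in> strings k n"
proof -
  obtain t where t: "t < length s" "w = window s n t" using assms(2) by (auto simp: W_def)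
  have "s ! ((t + i) mod length s) < k" for i
  proof -
    have "(t + i) mod length s < length s" using t(1) by (intro mod_less_divisor) linarith
    then show ?thesis using assms(1) nth_mem by blast
  qed
  then show ?thesis using t by (auto simp: strings_def window_def)
qed

lemma rots_lt: "0 < length p \<Longrightarrow> rots p = (\<lambda>t. rotate t p) ` {..<length p}"
  unfolding rots_def by (auto intro: image_eqI[of _ _ 0])

lemma W_self: assumes "length p = n" "0 < n" shows "W n p = rots p"
proof -
  have "window p n t = rotate t p" if "t < n" for t
    by (rule nth_equalityI) (use assms in \<open>simp_all add: nth_window nth_rotate add.commute\<close>)
  moreover have "rots p = (\<lambda>t. rotate t p) ` {..<n}"
  proof -
    have "0 < length p" using assms by simp
    then show ?thesis using rots_lt[of p] assms(1) by simp
  qed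
  ultimately show ?thesis using assms unfolding W_def by (auto simp: image_def)
qed

lemma splice: assumes L: "n \<le> length s1" and lp: "length p = n" and n1: "1 \<le> n"
  and pre: "take (n - 1) s1 = take (n - 1) p"
  shows "W n (s1 @ p) = W n s1 \<union> W n p"
proof -
  define L where "L = length s1"
  have ls: "length (s1 @ p) = L + n" using lp by (simp add: L_def)
  have s1i: "s1 ! m = p ! m" if "m < n - 1" for m
    by (metis pre that nth_take)
  have A: "window (s1 @ p) n t = window s1 n t" if t: "t < L" for t
  proof (rule nth_equalityI)
    fix i assume i: "i < length (window (s1 @ p) n t)"
    then have i: "i < n" by simp
    have "(s1 @ p) ! ((t + i) mod (L + n)) = s1 ! ((t + i) mod L)"
    proof (cases "t + i < L")
      case True then show ?thesis by (simp add: nth_append L_def)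
    next
      case False
      have m1: "(t + i) mod (L + n) = t + i" using t i by simp
      have m2: "(t + i) mod L = t + i - L" using False t i L L_def by (simp add: le_mod_geq)
      have "t + i - L < n - 1" using t i False by arith
      then show ?thesis using m1 m2 False s1i by (simp add: nth_append L_def)
    qed
    then show "window (s1 @ p) n t ! i = window s1 n t ! i" using i ls by (simp add: nth_window L_def)
  qed simp
  have B: "window (s1 @ p) n (L + u) = window p n u" if u: "u < n" for u
  proof (rule nth_equalityI)
    fix i assume i: "i < length (window (s1 @ p) n (L + u))"
    then have i: "i < n" by simp
    have "(s1 @ p) ! ((L + u + i) mod (L + n)) = p ! ((u + i) mod n)"
    proof (cases "u + i < n")
      case True then show ?thesis by (simp add: nth_append L_def)
    next
      case False
      have m1: "(L + u + i) mod (L + n) = u + i - n" using u i L L_def False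
        by (subst le_mod_geq) (simp_all add: L_def)
      have m2: "(u + i) mod n = u + i - n" using u i False by (simp add: le_mod_geq)
      have lt: "u + i - n < n - 1" using u i False by arith
      then have "u + i - n < L" using L L_def by arith
      then show ?thesis using m1 m2 lt s1i by (simp add: nth_append L_def)
    qed
    then show "window (s1 @ p) n (L + u) ! i = window p n u ! i" using i ls lp by (simp add: nth_window L_def)
  qed simp
  show ?thesis
  proof
    show "W n (s1 @ p) \<subseteq> W n s1 \<union> W n p"
    proof
      fix w assume "w \<in> W n (s1 @ p)"
      then obtain t where t: "t < L + n" "w = window (s1 @ p) n t" using ls by (auto simp: W_def)
      show "w \<in> W n s1 \<union> W n p"
      proof (cases "t < L")
        case True then show ?thesis using t A by (auto simp: W_def L_def)
      next
        case False
        then have "w = window p n (t - L)" using t B[of "t - L"] by simp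
        then show ?thesis using t False lp by (auto simp: W_def)
      qed
    qed
    show "W n s1 \<union> W n p \<subseteq> W n (s1 @ p)"
    proof
      fix w assume "w \<in> W n s1 \<union> W n p"
      then consider t where "t < L" "w = window s1 n t" | u where "u < n" "w = window p n u"
        using lp by (auto simp: W_def L_def)
      then show "w \<in> W n (s1 @ p)"
      proof cases
        case 1
        then have "t < L + n" by simp
        then show ?thesis using 1 A[of t] ls unfolding W_def by (metis image_eqI lessThan_iff)
      next
        case 2
        then have "L + u < L + n" by simp
        then show ?thesis using 2 B[of u] ls unfolding W_def by (metis image_eqI lessThan_iff)
      qed
    qed
  qed
qed

lemma ham_rot: assumes "length z = n" "length z' = n" "q < n" "\<forall>t<n. t \<noteq> q \<longrightarrow> z ! t = z' ! t"
  shows "take (n - 1) (rotate (q + 1) z) = take (n - 1) (rotate (q + 1) z')"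
proof (rule nth_equalityI)
  show "length (take (n - 1) (rotate (q + 1) z)) = length (take (n - 1) (rotate (q + 1) z'))"
    using assms by simp
  fix i assume "i < length (take (n - 1) (rotate (q + 1) z))"
  then have i: "i < n - 1" using assms by simp
  have ne: "(q + 1 + i) mod n \<noteq> q"
  proof (cases "q + 1 + i < n")
    case True then show ?thesis by simp
  next
    case False
    then have "(q + 1 + i) mod n = q + 1 + i - n" using i assms(3) by (simp add: le_mod_geq)
    moreover have "q + 1 + i - n \<noteq> q" using i False by arith
    ultimately show ?thesis by simp
  qed
  have lt: "(q + 1 + i) mod n < n" using assms(3) by simp
  have e1: "rotate (q + 1) z ! i = z ! ((q + 1 + i) mod n)"
    using nth_rotate[of i z "q+1"] i assms by simp
  have e2: "rotate (q + 1) z' ! i = z' ! ((q + 1 + i) mod n)"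
    using nth_rotate[of i z' "q+1"] i assms by simp
  show "take (n - 1) (rotate (q + 1) z) ! i = take (n - 1) (rotate (q + 1) z') ! i"
    by (simp only: nth_take[OF i] e1 e2) (use assms(4) ne lt in blast)
qed

lemma rots_closed: "\<forall>w\<in>A. \<forall>i. rotate i w \<in> A \<Longrightarrow> w \<in> A \<Longrightarrow> rots w \<subseteq> A"
  by (auto simp: rots_range)

lemma card_rots: assumes "\<not> Per z" "0 < length z" shows "card (rots z) = length z"
proof -
  have "inj_on (\<lambda>t. rotate t z) {..<length z}"
  proof (rule inj_onI, rule ccontr)
    fix a b assume a: "a \<in> {..<length z}" and b: "b \<in> {..<length z}" and e: "rotate a z = rotate b z" and ne: "a \<noteq> b"
    {
      fix a b assume a: "a < length z" and b: "b < length z" and e: "rotate a z = rotate b z" and lt: "a < b"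
      have "rotate (length z - a) (rotate a z) = rotate (length z - a) (rotate b z)" using e by simp
      moreover have "rotate (length z - a) (rotate a z) = z"
        using a by (simp add: rotate_rotate rotate_conv_mod[of "length z"])
      moreover have "rotate (length z - a) (rotate b z) = rotate (b - a) z"
      proof -
        have "rotate (length z - a) (rotate b z) = rotate (length z - a + b) z" by (simp add: rotate_rotate)
        also have "\<dots> = rotate ((length z - a + b) mod length z) z" by (rule rotate_conv_mod)
        also have "length z - a + b = (b - a) + length z" using a lt by simp
        also have "((b - a) + length z) mod length z = b - a" using b by simp
        finally show ?thesis .
      qed
      ultimately have "rotate (b - a) z = z" by simp
      then have False using assms(1) a b lt unfolding Per_def by (metis diff_less_mono2 diff_less zero_less_diff le_less_trans less_imp_le_nat diff_le_self)
    }
    then show False using a b e ne by (metis lessThan_iff linorder_neq_iff)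
  qed
  then show ?thesis using rots_lt[OF assms(2)] by (simp add: card_image)
qed

lemma in_rev_image: "x \<in> rev ` A \<longleftrightarrow> rev x \<in> A"
  by (metis image_iff rev_rev_ident)

lemma Sym_rev: "Sym (rev z) \<longleftrightarrow> Sym z"
  unfolding Sym_def rots_rev in_rev_image by simp

lemma Per_rev: assumes "Per (rev z)" shows "Per z"
proof -
  obtain d where d: "0 < d" "d < length z" "rotate d (rev z) = rev z" using assms by (auto simp: Per_def)
  have "rotate d (rev z) = rev (rotate (length z - d) z)" using d by (simp add: rotate_rev)
  then have "rotate (length z - d) z = z" using d(3) by simp
  moreover have "0 < length z - d" "length z - d < length z" using d by simp_all
  ultimately show ?thesis unfolding Per_def by blast
qed

lemma valid_orientable: assumes "valid k n s" shows "orientable k n s"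
proof -
  let ?ws = "map (window s n) [0..<length s]"
  have d: "distinct ?ws" using assms by (simp add: valid_def)
  have "distinct (map rev ?ws)" using d by (simp add: distinct_map inj_on_def)
  moreover have "set ?ws \<inter> set (map rev ?ws) = {}"
  proof -
    have "set (map rev ?ws) = rev ` W n s" by (simp add: W_def atLeast0LessThan image_image)
    moreover have "\<forall>w\<in>W n s. rev w \<notin> W n s" using assms by (simp add: valid_def)
    ultimately show ?thesis unfolding set_wins by (auto simp: in_rev_image)
  qed
  ultimately have dd: "distinct (?ws @ map rev ?ws)" using d by simp
  have ks: "\<forall>x\<in>set s. x < k" using assms by (simp add: valid_def)
  show ?thesis unfolding orientable_def Let_def using ks dd by blast
qed

lemma orientable_bound: assumes "orientable k n s" shows "2 * length s \<le> k ^ n"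
proof -
  let ?ws = "map (window s n) [0..<length s]"
  have d: "distinct (?ws @ map rev ?ws)" using assms unfolding orientable_def Let_def by blast
  have ks: "\<forall>x\<in>set s. x < k" using assms by (simp add: orientable_def)
  have "set (?ws @ map rev ?ws) \<subseteq> strings k n"
    using W_strings[OF ks] strings_rev set_wins by (auto simp: W_def)
  then have "card (set (?ws @ map rev ?ws)) \<le> k ^ n"
    using card_mono[OF finite_strings] card_strings by metis
  then show ?thesis using distinct_card[OF d] by simp
qed

lemma M_upper: "2 * M_k k n \<le> k ^ n"
proof -
  have fin: "finite {length s | s. orientable k n s}"
    by (rule finite_subset[of _ "{..k^n}"]) (auto dest: orientable_bound)
  have "[] \<in> {s. orientable k n s}" by (simp add: orientable_def)
  then have ne: "{length s | s. orientable k n s} \<noteq> {}" by blast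
  obtain s where "orientable k n s" "M_k k n = length s"
    using Max_in[OF fin ne] unfolding M_k_def by auto
  then show ?thesis using orientable_bound by simp
qed

lemma M_lower: assumes "orientable k n s" shows "length s \<le> M_k k n"
proof -
  have fin: "finite {length s | s. orientable k n s}"
    by (rule finite_subset[of _ "{..k^n}"]) (auto dest: orientable_bound)
  show ?thesis unfolding M_k_def using assms by (intro Max_ge[OF fin]) blast
qed

lemma rots_rev_not: assumes "\<not> Sym z" "w \<in> rots z" shows "rev w \<notin> rots z"
proof
  assume r: "rev w \<in> rots z"
  have "rots w = rots z" using assms(2) by (rule rots_trans)
  then have "rots (rev w) = rots (rev z)" by (simp add: rots_rev)
  moreover have "rots (rev w) = rots z" using r by (rule rots_trans)
  ultimately have "rev z \<in> rots z" using rots_self by metis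
  then show False using assms(1) by (simp add: Sym_def)
qed

lemma distinct_wins_card: "distinct (map (window s n) [0..<length s]) \<Longrightarrow> card (W n s) = length s"
  using distinct_card set_wins by (metis length_map length_upt minus_nat.diff_0)

lemma splice_step:
  assumes v: "valid k n s" and n1: "1 \<le> n" and zs: "z \<in> strings k n" and ns: "\<not> Sym z" and np: "\<not> Per z"
    and z'W: "z' \<in> W n s" and lz': "length z' = n" and q: "q < n" and agree: "\<forall>t<n. t \<noteq> q \<longrightarrow> z ! t = z' ! t"
    and zW: "z \<notin> W n s" and rzW: "rev z \<notin> W n s"
  shows "\<exists>s''. valid k n s'' \<and> length s'' = length s + n \<and> W n s \<subseteq> W n s''"
proof -
  have ks: "\<forall>x\<in>set s. x < k" and Ln: "n \<le> length s" and ds: "distinct (map (window s n) [0..<length s])"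
    and cl: "\<forall>w\<in>W n s. \<forall>i. rotate i w \<in> W n s" and rv: "\<forall>w\<in>W n s. rev w \<notin> W n s"
    using v by (simp_all add: valid_def)
  have lz: "length z = n" and kz: "\<forall>x\<in>set z. x < k" using zs by (simp_all add: strings_def)
  have L0: "0 < length s" using Ln n1 by linarith
  define r where "r = rotate (q + 1) z'"
  have "r \<in> W n s" unfolding r_def using cl z'W by blast
  then obtain t where t: "t < length s" "window s n t = r" by (auto simp: W_def)
  define s1 where "s1 = rotate t s"
  have Ws1: "W n s1 = W n s" using L0 by (simp add: s1_def W_rotate)
  have w0: "window s1 n 0 = r" using t L0 by (simp add: s1_def window_rotate)
  have ls1: "length s1 = length s" by (simp add: s1_def)
  have pre1: "take (n - 1) s1 = take (n - 1) r"
  proof (rule nth_equalityI)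
    show "length (take (n - 1) s1) = length (take (n - 1) r)" using Ln ls1 lz' by (simp add: r_def)
    fix i assume "i < length (take (n - 1) s1)"
    then have i: "i < n - 1" "i < length s" using Ln ls1 by auto
    have "r ! i = s1 ! ((0 + i) mod length s1)" using w0[symmetric] i by (simp add: nth_window)
    then show "take (n - 1) s1 ! i = take (n - 1) r ! i" using i ls1 by simp
  qed
  define p where "p = rotate (q + 1) z"
  have lp: "length p = n" using lz by (simp add: p_def)
  have pre2: "take (n - 1) p = take (n - 1) r"
    unfolding p_def r_def by (rule ham_rot[OF lz lz' q agree])
  define s2 where "s2 = s1 @ p"
  have W2: "W n s2 = W n s \<union> rots z"
  proof -
    have "W n s2 = W n s1 \<union> W n p" unfolding s2_def
      by (rule splice) (use Ln ls1 lp n1 pre1 pre2 in simp_all)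
    moreover have "W n p = rots p" using lp n1 by (simp add: W_self)
    moreover have "rots p = rots z" unfolding p_def by (rule rots_trans[OF rotate_in_rots])
    ultimately show ?thesis using Ws1 by simp
  qed
  have disj: "W n s \<inter> rots z = {}"
  proof (rule ccontr)
    assume "W n s \<inter> rots z \<noteq> {}"
    then obtain x where x: "x \<in> W n s" "x \<in> rots z" by blast
    then have "z \<in> rots x" by (rule_tac rots_sym)
    then show False using rots_closed[OF cl x(1)] zW by blast
  qed
  have cz: "card (rots z) = n" using card_rots[OF np] lz n1 by simp
  have cs: "card (W n s) = length s" using ds by (rule distinct_wins_card)
  have ls2: "length s2 = length s + n" using ls1 lp by (simp add: s2_def)
  have val: "valid k n s2"
    unfolding valid_def
  proof (intro conjI)
    show "\<forall>x\<in>set s2. x < k" using ks kz by (auto simp add: s2_def s1_def p_def)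
    show "n \<le> length s2" using ls2 by simp
    show "distinct (map (window s2 n) [0..<length s2])"
    proof (rule card_distinct)
      have "card (set (map (window s2 n) [0..<length s2])) = card (W n s2)" by (simp only: set_wins)
      also have "\<dots> = card (W n s) + card (rots z)" unfolding W2
        using disj by (intro card_Un_disjoint) (simp_all add: W_def finite_rots)
      also have "\<dots> = length s2" using cz cs ls2 by simp
      finally show "card (set (map (window s2 n) [0..<length s2])) = length (map (window s2 n) [0..<length s2])"
        by simp
    qed
    show "\<forall>w\<in>W n s2. \<forall>i. rotate i w \<in> W n s2"
    proof (intro ballI allI)
      fix w i assume "w \<in> W n s2"
      then consider "w \<in> W n s" | "w \<in> rots z" unfolding W2 by blast
      then show "rotate i w \<in> W n s2"
      proof cases
        case 1 then show ?thesis using cl unfolding W2 by blast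
      next
        case 2
        then have "rots w = rots z" by (rule rots_trans)
        then show ?thesis using rotate_in_rots[of i w] unfolding W2 by blast
      qed
    qed
    show "\<forall>w\<in>W n s2. rev w \<notin> W n s2"
    proof
      fix w assume "w \<in> W n s2"
      then consider "w \<in> W n s" | "w \<in> rots z" unfolding W2 by blast
      then show "rev w \<notin> W n s2"
      proof cases
        case 1
        have "rev w \<notin> W n s" using rv 1 by blast
        moreover have "rev w \<notin> rots z"
        proof
          assume "rev w \<in> rots z"
          then have "w \<in> rots (rev z)" by (simp add: rots_rev in_rev_image)
          then have "rev z \<in> rots w" by (rule rots_sym)
          then show False using rots_closed[OF cl 1] rzW by blast
        qed
        ultimately show ?thesis unfolding W2 by blast
      next
        case 2
        have "rev w \<notin> rots z" using rots_rev_not[OF ns 2] .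
        moreover have "rev w \<notin> W n s"
        proof
          assume a: "rev w \<in> W n s"
          have "rev w \<in> rots (rev z)" using 2 by (simp add: rots_rev)
          then have "rev z \<in> rots (rev w)" by (rule rots_sym)
          then show False using rots_closed[OF cl a] rzW by blast
        qed
        ultimately show ?thesis unfolding W2 by blast
      qed
    qed
  qed
  show ?thesis using val ls2 W2 by blast
qed

lemma valid_init: assumes "h \<in> strings k n" "\<not> Sym h" "\<not> Per h" "1 \<le> n"
  shows "valid k n h" "W n h = rots h"
proof -
  have lh: "length h = n" using assms by (simp add: strings_def)
  show Wh: "W n h = rots h" by (rule W_self[OF lh]) (use assms(4) in simp)
  have ch: "card (rots h) = n" using card_rots[OF assms(3)] lh assms(4) by simp
  show "valid k n h"
    unfolding valid_def
  proof (intro conjI)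
    show "\<forall>x\<in>set h. x < k" using assms by (simp add: strings_def)
    show "n \<le> length h" using lh by simp
    show "distinct (map (window h n) [0..<length h])"
    proof (rule card_distinct)
      show "card (set (map (window h n) [0..<length h])) = length (map (window h n) [0..<length h])"
        unfolding set_wins Wh ch using lh by simp
    qed
    show "\<forall>w\<in>W n h. \<forall>i. rotate i w \<in> W n h" unfolding Wh
      by (metis rots_trans rotate_in_rots)
    show "\<forall>w\<in>W n h. rev w \<notin> W n h" unfolding Wh using rots_rev_not[OF assms(2)] by blast
  qed
qed

lemma zz_n: "length w = n \<Longrightarrow> zz n w = map hf [0..<n]"
  by (simp add: zz_def)

lemma zz_0: "zz 0 w = w" by (simp add: zz_def)

lemma construct: assumes k3: "3 \<le> k" and n1: "1 \<le> n"
  shows "card (strings k n - bad k n) \<le> 2 * M_k k n"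
proof (cases "strings k n - bad k n = {}")
  case True then show ?thesis by (metis card.empty zero_le)
next
  case False
  define G where "G = strings k n - bad k n"
  have Gp: "zz j w \<in> strings k n \<and> \<not> Sym (zz j w) \<and> \<not> Per (zz j w)" if "w \<in> G" "j \<le> n" for w j
    using that zz_strings[of w k n j] k3 by (auto simp: G_def bad_def)
  obtain w0 where w0: "w0 \<in> G" using False by (auto simp: G_def)
  define h0 where "h0 = map hf [0..<n]"
  have lw0: "length w0 = n" using w0 by (simp add: G_def strings_def)
  have h0p: "h0 \<in> strings k n" "\<not> Sym h0" "\<not> Per h0" using Gp[OF w0, of n] zz_n[OF lw0] by (simp_all add: h0_def)
  define V where "V L \<longleftrightarrow> (\<exists>s. valid k n s \<and> h0 \<in> W n s \<and> length s = L)" for L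
  have Vn: "V n" unfolding V_def using valid_init[OF h0p n1] rots_self h0p(1)
    by (rule_tac x=h0 in exI) (simp add: strings_def)
  have Vb: "\<forall>L. V L \<longrightarrow> L \<le> k ^ n"
    unfolding V_def using orientable_bound valid_orientable by fastforce
  obtain Lm where Lm: "V Lm" "\<forall>L. V L \<longrightarrow> L \<le> Lm" using Nat.ex_has_greatest_nat[OF Vn Vb] by blast
  then obtain s where s: "valid k n s" "h0 \<in> W n s" "length s = Lm" unfolding V_def by blast
  have nogrow: False if "valid k n s''" "length s'' = length s + n" "W n s \<subseteq> W n s''" for s''
  proof -
    have "V (length s'')" unfolding V_def using that s(2) by blast
    then show False using Lm(2) that(2) s(3) n1 by fastforce
  qed
  have claim: "\<forall>w\<in>G. zz (n - m) w \<in> W n s \<union> rev ` W n s" if "m \<le> n" for m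
    using that
  proof (induction m)
    case 0
    show ?case
    proof
      fix w assume "w \<in> G"
      then have "length w = n" by (simp add: G_def strings_def)
      then have "zz n w = h0" by (simp add: zz_n h0_def)
      then show "zz (n - 0) w \<in> W n s \<union> rev ` W n s" using s(2) by simp
    qed
  next
    case (Suc m)
    show ?case
    proof (rule ballI, rule ccontr)
      fix w assume wG: "w \<in> G" and nz: "zz (n - Suc m) w \<notin> W n s \<union> rev ` W n s"
      define j where "j = n - Suc m"
      have jn: "j < n" "n - m = Suc j" using Suc.prems by (simp_all add: j_def)
      define z where "z = zz j w"
      define z' where "z' = zz (Suc j) w"
      have lw: "length w = n" using wG by (simp add: G_def strings_def)
      have z'in: "z' \<in> W n s \<union> rev ` W n s" using Suc.IH Suc.prems wG jn by (simp add: z'_def)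
      have zn: "z \<notin> W n s" "rev z \<notin> W n s" using nz by (auto simp: z_def j_def in_rev_image)
      have zp: "z \<in> strings k n" "\<not> Sym z" "\<not> Per z" using Gp[OF wG, of j] jn by (simp_all add: z_def)
      have lz: "length z = n" "length z' = n" using lw jn by (simp_all add: z_def z'_def length_zz)
      have agree: "\<forall>t<n. t \<noteq> j \<longrightarrow> z ! t = z' ! t"
        using lw jn by (auto simp: z_def z'_def nth_zz)
      show False
      proof (cases "z' \<in> W n s")
        case True
        obtain s'' where "valid k n s''" "length s'' = length s + n" "W n s \<subseteq> W n s''"
          using splice_step[OF s(1) n1 zp True lz(2) jn(1) agree zn] by blast
        then show False by (rule nogrow)
      next
        case False
        then have rz'W: "rev z' \<in> W n s" using z'in by (auto simp: in_rev_image)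
        have q: "n - 1 - j < n" using jn by simp
        have agree': "\<forall>t<n. t \<noteq> n - 1 - j \<longrightarrow> rev z ! t = rev z' ! t"
        proof (intro allI impI)
          fix t assume t: "t < n" "t \<noteq> n - 1 - j"
          have "n - Suc t \<noteq> j" "n - Suc t < n" using t jn by arith+
          then show "rev z ! t = rev z' ! t" using agree t lz by (simp add: rev_nth)
        qed
        have rzp: "rev z \<in> strings k n" "\<not> Sym (rev z)" "\<not> Per (rev z)"
          using zp by (simp_all add: strings_rev Sym_rev) (use Per_rev in blast)
        obtain s'' where "valid k n s''" "length s'' = length s + n" "W n s \<subseteq> W n s''"
          using splice_step[OF s(1) n1 rzp rz'W _ q agree'] lz zn by auto
        then show False by (rule nogrow)
      qed
    qed
  qed
  have GW: "G \<subseteq> W n s \<union> rev ` W n s" using claim[of n] by (simp add: zz_0) blast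
  have fW: "finite (W n s)" by (simp add: W_def)
  have "card G \<le> card (W n s \<union> rev ` W n s)" using GW fW by (intro card_mono) simp_all
  also have "\<dots> \<le> card (W n s) + card (rev ` W n s)" by (rule card_Un_le)
  also have "\<dots> \<le> 2 * card (W n s)" using card_image_le[OF fW, of rev] by simp
  also have "\<dots> = 2 * length s" using s(1) distinct_wins_card by (simp add: valid_def)
  also have "\<dots> \<le> 2 * M_k k n" using M_lower[OF valid_orientable[OF s(1)]] by simp
  finally show ?thesis by (simp add: G_def)
qed



lemma e_lim: assumes k3: "3 \<le> k"
  shows "(\<lambda>n. real ((n + 1) * (2 * n + 1) * k ^ (n div 2 + 3)) / real k ^ n) \<longlonglongrightarrow> 0"
proof -
  define r where "r = root 4 (real k)"
  have kpos: "0 < real k" using k3 by simp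
  have r4: "r ^ 4 = real k" unfolding r_def using kpos by (simp add: real_root_pow_pos)
  have r1: "1 < r" unfolding r_def using k3 by simp
  have rpos: "0 < r" using r1 by simp
  define g where "g n = 6 * real k ^ 3 * (real n / r ^ n) ^ 2" for n
  have g0: "g \<longlonglongrightarrow> 0"
  proof -
    have "(\<lambda>n. real n / r ^ n) \<longlonglongrightarrow> 0" using lim_n_over_pown[of r] r1 by simp
    then have "(\<lambda>n. (real n / r ^ n) ^ 2) \<longlonglongrightarrow> 0 ^ 2" by (rule tendsto_power)
    then have "(\<lambda>n. 6 * real k ^ 3 * (real n / r ^ n) ^ 2) \<longlonglongrightarrow> 6 * real k ^ 3 * 0 ^ 2"
      by (intro tendsto_mult tendsto_const)
    moreover have "g = (\<lambda>n. 6 * real k ^ 3 * (real n / r ^ n) ^ 2)" by (rule ext) (simp add: g_def)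
    ultimately show ?thesis by simp
  qed
  have bnd: "real ((n + 1) * (2 * n + 1) * k ^ (n div 2 + 3)) / real k ^ n \<le> g n" if n1: "1 \<le> n" for n
  proof -
    define m where "m = n div 2"
    have kn: "real k ^ n = real k ^ m * real k ^ (n - m)"
      by (simp add: m_def power_add[symmetric])
    have "2 * n \<le> 4 * (n - m)" unfolding m_def by linarith
    then have "r ^ (2 * n) \<le> r ^ (4 * (n - m))" using r1 by (intro power_increasing) simp_all
    also have "\<dots> = real k ^ (n - m)" by (simp add: power_mult r4)
    finally have rk: "r ^ (2 * n) \<le> real k ^ (n - m)" .
    have poly: "real ((n + 1) * (2 * n + 1)) \<le> 6 * real n ^ 2"
    proof -
      have a: "n \<le> n * n" "1 \<le> n * n" using n1 by simp_all
      have "(n + 1) * (2 * n + 1) = 2 * (n * n) + 3 * n + 1" by (simp add: algebra_simps)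
      then have "(n + 1) * (2 * n + 1) \<le> 6 * n ^ 2" using a unfolding power2_eq_square by linarith
      then have "real ((n + 1) * (2 * n + 1)) \<le> real (6 * n ^ 2)" by (simp only: of_nat_le_iff)
      then show ?thesis by simp
    qed
    have "real ((n + 1) * (2 * n + 1) * k ^ (n div 2 + 3)) / real k ^ n
        = real ((n + 1) * (2 * n + 1)) * real k ^ 3 / real k ^ (n - m)"
      using kpos by (simp add: kn m_def power_add field_simps)
    also have "\<dots> \<le> real ((n + 1) * (2 * n + 1)) * real k ^ 3 / r ^ (2 * n)"
      using rk rpos kpos by (intro divide_left_mono) simp_all
    also have "\<dots> \<le> 6 * real n ^ 2 * real k ^ 3 / r ^ (2 * n)"
      using poly rpos kpos by (intro divide_right_mono mult_right_mono) simp_all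
    also have "\<dots> = g n" by (simp add: g_def power_mult power_divide field_simps power2_eq_square)
    finally show ?thesis .
  qed
  show ?thesis
  proof (rule tendsto_sandwich[OF _ _ tendsto_const g0])
    show "\<forall>\<^sub>F n in sequentially. 0 \<le> real ((n + 1) * (2 * n + 1) * k ^ (n div 2 + 3)) / real k ^ n"
      by simp
    show "\<forall>\<^sub>F n in sequentially. real ((n + 1) * (2 * n + 1) * k ^ (n div 2 + 3)) / real k ^ n \<le> g n"
      using bnd by (intro eventually_sequentiallyI[of 1]) simp
  qed
qed

lemma Sym_bad: "card {w \<in> strings k n. Sym w} \<le> card (bad k n)"
proof (rule card_mono)
  show "finite (bad k n)" using finite_strings by (simp add: bad_def)
  show "{w \<in> strings k n. Sym w} \<subseteq> bad k n" unfolding bad_def using zz_0 by fastforce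
qed

lemma M_low2: assumes "3 \<le> k" "1 \<le> n" shows "k ^ n \<le> 2 * M_k k n + card (bad k n)"
proof -
  have "card (strings k n) \<le> card ((strings k n - bad k n) \<union> bad k n)"
  proof (rule card_mono)
    show "finite (strings k n - bad k n \<union> bad k n)" using finite_strings by (simp add: bad_def)
    show "strings k n \<subseteq> strings k n - bad k n \<union> bad k n" by blast
  qed
  also have "\<dots> \<le> card (strings k n - bad k n) + card (bad k n)" by (rule card_Un_le)
  finally show ?thesis using construct[OF assms] card_strings by simp
qed

theorem mainTheorem12:
  fixes k :: nat
  assumes "k \<ge> 3"
  shows "(\<lambda>n. (real (M_k k n) - real (L_k k n)) / real (L_k k n)) \<longlonglongrightarrow> 0"
proof -
  define E where "E n = (n + 1) * (2 * n + 1) * k ^ (n div 2 + 3)" for n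
  define e where "e n = real (E n) / real k ^ n" for n
  have e0: "e \<longlonglongrightarrow> 0"
  proof -
    have "(\<lambda>n. real ((n + 1) * (2 * n + 1) * k ^ (n div 2 + 3)) / real k ^ n) \<longlonglongrightarrow> 0"
      by (rule e_lim[OF assms])
    moreover have "e = (\<lambda>n. real ((n + 1) * (2 * n + 1) * k ^ (n div 2 + 3)) / real k ^ n)"
      by (rule ext) (simp add: e_def E_def)
    ultimately show ?thesis by simp
  qed
  have ev: "\<forall>\<^sub>F n in sequentially. e n < 1 / 2" using order_tendstoD(2)[OF e0, of "1/2"] by simp
  have k1: "k \<ge> 1" using assms by simp
  have key: "\<bar>(real (M_k k n) - real (L_k k n)) / real (L_k k n)\<bar> \<le> 2 * e n"
    if n1: "1 \<le> n" and en: "e n < 1 / 2" for n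
  proof -
    define N where "N = real k ^ n"
    have Npos: "0 < N" using assms by (simp add: N_def)
    have cb: "card (bad k n) \<le> E n" using card_bad[OF k1] by (simp add: E_def)
    have "real (2 * M_k k n) \<le> real (k ^ n)" using M_upper[of k n] by (simp only: of_nat_le_iff)
    then have h1: "2 * real (M_k k n) \<le> N" unfolding N_def by simp
    have "real (2 * L_k k n) \<le> real (k ^ n)" using L_upper[of k n] by (simp only: of_nat_le_iff)
    then have h2: "2 * real (L_k k n) \<le> N" unfolding N_def by simp
    have h3: "N \<le> 2 * real (M_k k n) + real (E n)"
    proof -
      have "k ^ n \<le> 2 * M_k k n + E n" using M_low2[OF assms n1] cb by linarith
      then have "real (k ^ n) \<le> real (2 * M_k k n + E n)" by (simp only: of_nat_le_iff)
      then show ?thesis unfolding N_def by simp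
    qed
    have h4: "N \<le> 2 * real (L_k k n) + real (E n)"
    proof -
      have "k ^ n \<le> 2 * L_k k n + E n" using L_lower[of k n] Sym_bad[of k n] cb by linarith
      then have "real (k ^ n) \<le> real (2 * L_k k n + E n)" by (simp only: of_nat_le_iff)
      then show ?thesis unfolding N_def by simp
    qed
    have eE: "real (E n) = e n * N" using Npos by (simp add: e_def N_def)
    have "e n * N \<le> (1/2) * N" using en Npos by (intro mult_right_mono) simp_all
    then have Lpos: "N / 4 \<le> real (L_k k n)" using h4 eE by linarith
    have diff: "\<bar>real (M_k k n) - real (L_k k n)\<bar> \<le> real (E n) / 2" using h1 h2 h3 h4 by linarith
    have "\<bar>(real (M_k k n) - real (L_k k n)) / real (L_k k n)\<bar>
        = \<bar>real (M_k k n) - real (L_k k n)\<bar> / real (L_k k n)" by simp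
    also have "\<dots> \<le> (real (E n) / 2) / (N / 4)"
      using diff Lpos Npos by (intro frac_le) simp_all
    also have "\<dots> = 2 * e n" using Npos eE by (simp add: field_simps)
    finally show ?thesis .
  qed
  have ev2: "\<forall>\<^sub>F n in sequentially. \<bar>(real (M_k k n) - real (L_k k n)) / real (L_k k n)\<bar> \<le> 2 * e n"
    using ev eventually_ge_at_top[of 1] by eventually_elim (use key in auto)
  have e2: "(\<lambda>n. 2 * e n) \<longlonglongrightarrow> 0" using tendsto_mult_right_zero[OF e0] by simp
  have e2': "(\<lambda>n. - (2 * e n)) \<longlonglongrightarrow> 0" using tendsto_minus[OF e2] by simp
  show ?thesis
  proof (rule tendsto_sandwich[OF _ _ e2' e2])
    show "\<forall>\<^sub>F n in sequentially. - (2 * e n) \<le> (real (M_k k n) - real (L_k k n)) / real (L_k k n)"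
      using ev2 by eventually_elim linarith
    show "\<forall>\<^sub>F n in sequentially. (real (M_k k n) - real (L_k k n)) / real (L_k k n) \<le> 2 * e n"
      using ev2 by eventually_elim linarith
  qed
qed


end
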